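(* Let $K\ge 1$ and $N\ge 1$ be integers, let $0\le \tau_1<\tau_2<\dots<\tau_K\le 1$, and let $\{w(\tau)\}_{\tau\in[0,1]}\subset\mathbb{R}^p$ be a fixed (non-random) weight trajectory. For each $k$, let $p_{\tau_k}$ be a probability distribution on $X\times Y$ and let $\hat p_{\tau_k}$ be a sample of $N$ pairs $(x,y)$ drawn i.i.d. from $p_{\tau_k}$, the samples for different $k$ being independent. Let $\ell(w;x,y)$ be a loss taking values in $[0,M]$ for some $M>0$. For $r\ge 0$ and each $k$ define the Rademacher complexity $$\mathcal{R}^{(k)}_N(r)=\mathbb{E}_{\hat p\sim p_{\tau_k}^N}\,\mathbb{E}_\sigma\Big[\sup_{w:\ \|w\|_{\mathrm{FR}}\le r}\frac1N\sum_{i=1}^N\sigma^i\,\ell(w;x^i,y^i)\Big],$$ where $\sigma^1,\dots,\sigma^N$ are i.i.d. uniform on $\{-1,1\}$ and $\hat p=\{(x^i,y^i)\}_{i=1}^N$. Set $R=\frac{2}{K}\sum_{k=1}^K\mathcal{R}^{(k)}_N(\|w(\tau_k)\|_{\mathrm{FR}})$. Then for every $\epsilon>R$, $$\Pr\Big\{\frac1K\sum_{k=1}^K\Big(\mathbb{E}_{(x,y)\sim p_{\tau_k}}[\ell(w(\tau_k);x,y)]-\frac1N\sum_{(x,y)\in\hat p_{\tau_k}}\ell(w(\tau_k);x,y)\Big)>\epsilon\Big\}\le \exp\Big\{-\frac{2K}{M^2}\big(\epsilon-R\big)^2\Big\}.$$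
   Context: $\|\cdot\|_{\mathrm{FR}}$ denotes the Fisher-Rao norm of a weight vector, $\|w\|_{\mathrm{FR}}^2=\langle w, g(w)\,w\rangle$, where $g(w)$ is the Fisher Information Matrix of the model $p_w(y\mid x)$: $g_{ij}(w)=\mathbb{E}_{x\sim p(x),\,y\sim p_w(y|x)}[\partial_{w_i}\log p_w(y|x)\,\partial_{w_j}\log p_w(y|x)]$. The supremum in the Rademacher complexity is over all weights in the Fisher-Rao-norm ball of the given radius (assumed measurable). *)

theory Defs
  imports "HOL-Probability.Probability"
begin

text \<open>Weights live in R^p, modelled as real^'p for a finite index type 'p.
  The probabilistic model p_w(y|x) is given by a density f w x y with respect
  to a base measure nu on Y; inputs x are distributed according to PX.\<close>

definition partial_coord :: "(real^'p \<Rightarrow> real) \<Rightarrow> 'p \<Rightarrow> real^'p \<Rightarrow> real" where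
  "partial_coord h i w = deriv (\<lambda>t. h (w + t *\<^sub>R axis i 1)) 0"

definition fisher_info ::
  "'x measure \<Rightarrow> 'y measure \<Rightarrow> (real^'p \<Rightarrow> 'x \<Rightarrow> 'y \<Rightarrow> real) \<Rightarrow> real^'p \<Rightarrow> 'p \<Rightarrow> 'p \<Rightarrow> real" where
  "fisher_info PX \<nu> f w i j =
     (\<integral>x. (\<integral>y. partial_coord (\<lambda>v. ln (f v x y)) i w * partial_coord (\<lambda>v. ln (f v x y)) j w
               * f w x y \<partial>\<nu>) \<partial>PX)"

definition fr_norm ::
  "'x measure \<Rightarrow> 'y measure \<Rightarrow> (real^'p \<Rightarrow> 'x \<Rightarrow> 'y \<Rightarrow> real) \<Rightarrow> real^'p \<Rightarrow> real" where
  "fr_norm PX \<nu> f w = sqrt (\<Sum>i\<in>UNIV. \<Sum>j\<in>UNIV. w $ i * fisher_info PX \<nu> f w i j * w $ j)"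

definition rad_signs :: "nat \<Rightarrow> (nat \<Rightarrow> real) set" where
  "rad_signs N = PiE {1..N} (\<lambda>_. {-1, 1})"

definition emp_rademacher ::
  "nat \<Rightarrow> (real^'p \<Rightarrow> 'x \<Rightarrow> 'y \<Rightarrow> real) \<Rightarrow> (real^'p) set \<Rightarrow> (nat \<Rightarrow> 'x \<times> 'y) \<Rightarrow> real" where
  "emp_rademacher N loss W S =
     (\<Sum>\<sigma>\<in>rad_signs N. (SUP w\<in>W. (1 / real N) * (\<Sum>i\<in>{1..N}. \<sigma> i * loss w (fst (S i)) (snd (S i)))))
     / 2 ^ N"

definition rademacher ::
  "('x \<times> 'y) measure \<Rightarrow> nat \<Rightarrow> (real^'p \<Rightarrow> 'x \<Rightarrow> 'y \<Rightarrow> real) \<Rightarrow> (real^'p) set \<Rightarrow> real" where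
  "rademacher D N loss W = (\<integral>S. emp_rademacher N loss W S \<partial>(PiM {1..N} (\<lambda>_. D)))"

end

theory Submission
  imports Defs
begin

lemma emp_rad_nonneg:
  fixes loss :: "real^'p \<Rightarrow> 'x \<Rightarrow> 'y \<Rightarrow> real"
  assumes w0: "w0 \<in> W" and lr: "\<And>v x y. 0 \<le> loss v x y \<and> loss v x y \<le> M"
  shows "0 \<le> emp_rademacher N loss W S"
proof -
  define t where "t = (\<lambda>\<sigma> w. (1 / real N) * (\<Sum>i\<in>{1..N}. \<sigma> i * loss w (fst (S i)) (snd (S i))))"
  define A where "A = rad_signs N"
  have sig: "\<sigma> \<in> A \<Longrightarrow> i \<in> {1..N} \<Longrightarrow> \<bar>\<sigma> i\<bar> \<le> 1" for \<sigma> i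
    unfolding A_def rad_signs_def by (force simp: PiE_iff)
  have bdd: "\<bar>t \<sigma> w\<bar> \<le> (1 / real N) * (\<Sum>i\<in>{1..N}. M)" if "\<sigma> \<in> A" for \<sigma> w
  proof -
    have "\<bar>\<Sum>i\<in>{1..N}. \<sigma> i * loss w (fst (S i)) (snd (S i))\<bar> \<le> (\<Sum>i\<in>{1..N}. \<bar>\<sigma> i * loss w (fst (S i)) (snd (S i))\<bar>)"
      by (rule sum_abs)
    also have "\<dots> \<le> (\<Sum>i\<in>{1..N}. M)"
    proof (rule sum_mono)
      fix i assume i: "i \<in> {1..N}"
      have "\<bar>\<sigma> i * loss w (fst (S i)) (snd (S i))\<bar> = \<bar>\<sigma> i\<bar> * loss w (fst (S i)) (snd (S i))"
        using lr by (simp add: abs_mult)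
      also have "\<dots> \<le> 1 * M" using sig[OF that i] lr
        by (intro mult_mono) auto
      finally show "\<bar>\<sigma> i * loss w (fst (S i)) (snd (S i))\<bar> \<le> M" by simp
    qed
    finally show ?thesis unfolding t_def by (simp add: abs_mult divide_right_mono del: sum_constant)
  qed
  have ge: "t \<sigma> w0 \<le> (SUP w\<in>W. t \<sigma> w)" if "\<sigma> \<in> A" for \<sigma>
  proof (rule cSUP_upper[OF w0])
    show "bdd_above (t \<sigma> ` W)"
      using bdd[OF that] by (intro bdd_aboveI[where M="(1 / real N) * (\<Sum>i\<in>{1..N}. M)"]) (auto simp: abs_le_iff)
  qed
  define g where "g = (\<lambda>\<sigma>::nat\<Rightarrow>real. restrict (\<lambda>i. - \<sigma> i) {1..N})"
  have gA: "\<sigma> \<in> A \<Longrightarrow> g \<sigma> \<in> A" for \<sigma>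
    unfolding A_def rad_signs_def g_def by (auto simp: PiE_iff)
  have gg: "\<sigma> \<in> A \<Longrightarrow> g (g \<sigma>) = \<sigma>" for \<sigma>
    unfolding A_def rad_signs_def g_def by (auto simp: PiE_iff restrict_def fun_eq_iff extensional_def)
  have tg: "t (g \<sigma>) w0 = - t \<sigma> w0" for \<sigma>
    unfolding t_def g_def by (simp add: sum_negf)
  have "(\<Sum>\<sigma>\<in>A. t (g \<sigma>) w0) = (\<Sum>\<sigma>\<in>A. t \<sigma> w0)"
    by (rule sum.reindex_bij_witness[where i=g and j=g]) (auto simp: gA gg)
  hence "(\<Sum>\<sigma>\<in>A. t \<sigma> w0) = 0" by (simp add: tg sum_negf)
  hence "0 \<le> (\<Sum>\<sigma>\<in>A. (SUP w\<in>W. t \<sigma> w))"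
    by (metis ge sum_mono)
  moreover have "emp_rademacher N loss W S = (\<Sum>\<sigma>\<in>A. (SUP w\<in>W. t \<sigma> w)) / 2 ^ N"
    unfolding emp_rademacher_def t_def A_def by simp
  ultimately show ?thesis by simp
qed

theorem mainTheorem1:
  fixes K N :: nat
    and \<tau> :: "nat \<Rightarrow> real"
    and w :: "real \<Rightarrow> real^'p"
    and D :: "nat \<Rightarrow> ('x \<times> 'y) measure"
    and loss :: "real^'p \<Rightarrow> 'x \<Rightarrow> 'y \<Rightarrow> real"
    and M :: real
    and PX :: "'x measure" and \<nu> :: "'y measure"
    and f :: "real^'p \<Rightarrow> 'x \<Rightarrow> 'y \<Rightarrow> real"
    and \<epsilon> :: real
  assumes K: "K \<ge> 1" and N: "N \<ge> 1"
    and tau_range: "\<And>k. k \<in> {1..K} \<Longrightarrow> 0 \<le> \<tau> k \<and> \<tau> k \<le> 1"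
    and tau_mono: "\<And>k l. k \<in> {1..K} \<Longrightarrow> l \<in> {1..K} \<Longrightarrow> k < l \<Longrightarrow> \<tau> k < \<tau> l"
    and D_prob: "\<And>k. k \<in> {1..K} \<Longrightarrow> prob_space (D k)"
    and PX_prob: "prob_space PX"
    and f_nonneg: "\<And>v x y. 0 \<le> f v x y"
    and f_meas: "\<And>v x. f v x \<in> borel_measurable \<nu>"
    and f_density: "\<And>v x. (\<integral>\<^sup>+ y. ennreal (f v x y) \<partial>\<nu>) = 1"
    and M_pos: "M > 0"
    and loss_range: "\<And>v x y. 0 \<le> loss v x y \<and> loss v x y \<le> M"
    and loss_meas: "\<And>v k. k \<in> {1..K} \<Longrightarrow> (\<lambda>z. loss v (fst z) (snd z)) \<in> borel_measurable (D k)"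
    and sup_meas: "\<And>k r. k \<in> {1..K} \<Longrightarrow> r \<ge> 0 \<Longrightarrow>
        emp_rademacher N loss {v. fr_norm PX \<nu> f v \<le> r} \<in> borel_measurable (PiM {1..N} (\<lambda>_. D k))"
    and eps: "\<epsilon> > (2 / real K) * (\<Sum>k\<in>{1..K}.
               rademacher (D k) N loss {v. fr_norm PX \<nu> f v \<le> fr_norm PX \<nu> f (w (\<tau> k))})"
  shows "measure (PiM ({1..K} \<times> {1..N}) (\<lambda>(k, i). D k))
           {S \<in> space (PiM ({1..K} \<times> {1..N}) (\<lambda>(k, i). D k)).
              (1 / real K) * (\<Sum>k\<in>{1..K}.
                 (\<integral>z. loss (w (\<tau> k)) (fst z) (snd z) \<partial>(D k))
                 - (1 / real N) * (\<Sum>i\<in>{1..N}. loss (w (\<tau> k)) (fst (S (k, i))) (snd (S (k, i)))))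
              > \<epsilon>}
         \<le> exp (- (2 * real K / M\<^sup>2) * (\<epsilon> - (2 / real K) * (\<Sum>k\<in>{1..K}.
               rademacher (D k) N loss {v. fr_norm PX \<nu> f v \<le> fr_norm PX \<nu> f (w (\<tau> k))}))\<^sup>2)"
proof -
  define R where "R = (2 / real K) * (\<Sum>k\<in>{1..K}.
               rademacher (D k) N loss {v. fr_norm PX \<nu> f v \<le> fr_norm PX \<nu> f (w (\<tau> k))})"
  have R0: "R \<ge> 0"
    unfolding R_def rademacher_def
    apply (intro mult_nonneg_nonneg sum_nonneg)
     apply simp
    subgoal for k
    proof (rule Bochner_Integration.integral_nonneg)
      fix S
      show "0 \<le> emp_rademacher N loss {v. fr_norm PX \<nu> f v \<le> fr_norm PX \<nu> f (w (\<tau> k))} S"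
        by (rule emp_rad_nonneg[of "w (\<tau> k)" _ loss M]) (auto simp: loss_range)
    qed
    done
  have eps': "\<epsilon> > R" using eps R_def by simp
  define J where "J = {1..K} \<times> {1..N}"
  define M' where "M' = (\<lambda>j::nat\<times>nat. if j \<in> J then D (fst j) else D 1)"
  have K1: "1 \<in> {1..K}" using K by simp
  have M'prob: "prob_space (M' j)" for j
    unfolding M'_def J_def using D_prob K1 by (auto simp: mem_Times_iff)
  have PiEq: "PiM ({1..K} \<times> {1..N}) (\<lambda>(k, i). D k) = PiM J M'"
    unfolding J_def M'_def by (rule PiM_cong) auto
  interpret PP: product_prob_space M' J
    by (rule product_prob_spaceI[OF M'prob])
  have finJ: "finite J" unfolding J_def by simp
  have JnE: "J \<noteq> {}" unfolding J_def using K N by auto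
  define Y where "Y = (\<lambda>j::nat\<times>nat. \<lambda>z::'x\<times>'y. loss (w (\<tau> (fst j))) (fst z) (snd z))"
  define X where "X = (\<lambda>j (\<omega>::nat\<times>nat \<Rightarrow> 'x\<times>'y). Y j (\<omega> j))"
  have Ymeas: "Y j \<in> borel_measurable (M' j)" if "j \<in> J" for j
    using loss_meas that unfolding Y_def M'_def J_def by (auto simp: mem_Times_iff)
  have ind0: "prob_space.indep_vars (PiM J M') M' (\<lambda>j \<omega>. \<omega> j) J"
  proof (subst prob_space.indep_vars_iff_distr_eq_PiM'[OF PP.P.prob_space_axioms JnE])
    show "(\<lambda>\<omega>. \<omega> j) \<in> measurable (PiM J M') (M' j)" if "j \<in> J" for j
      using that by (rule measurable_component_singleton)
    have "distr (PiM J M') (PiM J M') (\<lambda>x. restrict (\<lambda>j. x j) J) = distr (PiM J M') (PiM J M') (\<lambda>x. x)"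
      by (rule distr_cong) (auto simp: space_PiM)
    also have "\<dots> = PiM J M'" by (rule distr_id)
    also have "\<dots> = PiM J (\<lambda>j. distr (PiM J M') (M' j) (\<lambda>\<omega>. \<omega> j))"
      by (rule PiM_cong) (auto simp: PP.PiM_component)
    finally show "distr (PiM J M') (PiM J M') (\<lambda>x. restrict (\<lambda>j. x j) J) = PiM J (\<lambda>j. distr (PiM J M') (M' j) (\<lambda>\<omega>. \<omega> j))" .
  qed
  have ind: "prob_space.indep_vars (PiM J M') (\<lambda>_. borel) X J"
    unfolding X_def
    by (rule prob_space.indep_vars_compose2[OF PP.P.prob_space_axioms ind0 Ymeas])
  interpret H: Hoeffding_ineq "PiM J M'" J X "\<lambda>_. 0" "\<lambda>_. M" "\<Sum>j\<in>J. prob_space.expectation (PiM J M') (X j)"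
  proof unfold_locales
    show "finite J" by (rule finJ)
    show "prob_space.indep_vars (PiM J M') (\<lambda>_. borel) X J" by (rule ind)
    show "AE x in PiM J M'. X j x \<in> {0..M}" if "j \<in> J" for j
      unfolding X_def Y_def using loss_range by simp
  qed simp
  have EX: "prob_space.expectation (PiM J M') (X j) = (\<integral>z. loss (w (\<tau> (fst j))) (fst z) (snd z) \<partial>(D (fst j)))"
    if "j \<in> J" for j
  proof -
    have "prob_space.expectation (PiM J M') (X j) = integral\<^sup>L (distr (PiM J M') (M' j) (\<lambda>\<omega>. \<omega> j)) (Y j)"
      unfolding X_def using that Ymeas[OF that] by (subst integral_distr) auto
    also have "\<dots> = integral\<^sup>L (M' j) (Y j)" using that by (simp add: PP.PiM_component)
    finally show ?thesis using that unfolding M'_def Y_def by simp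
  qed
  define E where "E = (\<lambda>k. (\<integral>z. loss (w (\<tau> k)) (fst z) (snd z) \<partial>(D k)))"
  define \<mu> where "\<mu> = (\<Sum>j\<in>J. prob_space.expectation (PiM J M') (X j))"
  have mu: "\<mu> = real N * (\<Sum>k\<in>{1..K}. E k)"
  proof -
    have "\<mu> = (\<Sum>j\<in>J. E (fst j))" unfolding \<mu>_def E_def by (rule sum.cong) (auto simp: EX)
    also have "\<dots> = (\<Sum>k\<in>{1..K}. \<Sum>i\<in>{1..N}. E k)" unfolding J_def by (subst sum.cartesian_product) (simp add: case_prod_beta)
    finally show ?thesis by (simp add: sum_distrib_left)
  qed
  have sumX: "(\<Sum>j\<in>J. X j x) = (\<Sum>k\<in>{1..K}. \<Sum>i\<in>{1..N}. loss (w (\<tau> k)) (fst (x (k, i))) (snd (x (k, i))))" for x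
    unfolding J_def X_def Y_def by (subst sum.cartesian_product) (simp add: case_prod_beta)
  define B where "B = {x\<in>space (PiM J M'). (\<Sum>j\<in>J. X j x) \<le> \<mu> - real K * real N * \<epsilon>}"
  have Bmeas: "B \<in> sets (PiM J M')"
  proof -
    have "(\<lambda>x. \<Sum>j\<in>J. X j x) \<in> borel_measurable (PiM J M')"
      by (intro borel_measurable_sum H.random_variable)
    thus ?thesis unfolding B_def by measurable
  qed
  have eps0: "\<epsilon> \<ge> 0" using R0 eps' by simp
  have cardJ: "card J = K * N" unfolding J_def by (simp add: card_cartesian_product)
  have Kpos: "real K > 0" and Npos: "real N > 0" using K N by auto
  have sub: "{S \<in> space (PiM ({1..K} \<times> {1..N}) (\<lambda>(k, i). D k)).
              (1 / real K) * (\<Sum>k\<in>{1..K}.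
                 (\<integral>z. loss (w (\<tau> k)) (fst z) (snd z) \<partial>(D k))
                 - (1 / real N) * (\<Sum>i\<in>{1..N}. loss (w (\<tau> k)) (fst (S (k, i))) (snd (S (k, i)))))
              > \<epsilon>} \<subseteq> B"
  proof
    fix S assume "S \<in> {S \<in> space (PiM ({1..K} \<times> {1..N}) (\<lambda>(k, i). D k)).
              (1 / real K) * (\<Sum>k\<in>{1..K}.
                 (\<integral>z. loss (w (\<tau> k)) (fst z) (snd z) \<partial>(D k))
                 - (1 / real N) * (\<Sum>i\<in>{1..N}. loss (w (\<tau> k)) (fst (S (k, i))) (snd (S (k, i)))))
              > \<epsilon>}"
    hence Ssp: "S \<in> space (PiM J M')" and
      c: "(1 / real K) * (\<Sum>k\<in>{1..K}. E k - (1 / real N) * (\<Sum>i\<in>{1..N}. loss (w (\<tau> k)) (fst (S (k, i))) (snd (S (k, i))))) > \<epsilon>"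
      using PiEq unfolding E_def by auto
    define s where "s = (\<lambda>k. (\<Sum>i\<in>{1..N}. loss (w (\<tau> k)) (fst (S (k, i))) (snd (S (k, i)))))"
    have c1: "(\<Sum>k\<in>{1..K}. E k) - (1 / real N) * (\<Sum>k\<in>{1..K}. s k) > real K * \<epsilon>"
      using c Kpos unfolding s_def by (simp add: sum_subtractf sum_distrib_left field_simps)
    have "real N * ((\<Sum>k\<in>{1..K}. E k) - (1 / real N) * (\<Sum>k\<in>{1..K}. s k)) > real N * (real K * \<epsilon>)"
      using c1 Npos by (rule mult_strict_left_mono)
    hence "(\<Sum>k\<in>{1..K}. s k) \<le> \<mu> - real K * real N * \<epsilon>"
      using Npos unfolding mu by (simp add: algebra_simps)
    thus "S \<in> B" unfolding B_def using Ssp sumX s_def by simp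
  qed
  have "measure (PiM ({1..K} \<times> {1..N}) (\<lambda>(k, i). D k)) {S \<in> space (PiM ({1..K} \<times> {1..N}) (\<lambda>(k, i). D k)).
              (1 / real K) * (\<Sum>k\<in>{1..K}.
                 (\<integral>z. loss (w (\<tau> k)) (fst z) (snd z) \<partial>(D k))
                 - (1 / real N) * (\<Sum>i\<in>{1..N}. loss (w (\<tau> k)) (fst (S (k, i))) (snd (S (k, i)))))
              > \<epsilon>} \<le> measure (PiM J M') B"
    using sub Bmeas unfolding PiEq by (rule PP.P.finite_measure_mono)
  also have "\<dots> \<le> exp (-2 * (real K * real N * \<epsilon>)\<^sup>2 / (\<Sum>j\<in>J. (M - 0)\<^sup>2))"
    unfolding B_def \<mu>_def
  proof (rule H.Hoeffding_ineq_le)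
    show "0 \<le> real K * real N * \<epsilon>" using eps0 by simp
    show "0 < (\<Sum>j\<in>J. (M - 0)\<^sup>2)" using cardJ K N M_pos by simp
  qed
  also have "\<dots> = exp (- (2 * real K * real N / M\<^sup>2) * \<epsilon>\<^sup>2)"
    using cardJ Kpos Npos M_pos by (simp add: power2_eq_square field_simps)
  also have "\<dots> \<le> exp (- (2 * real K / M\<^sup>2) * (\<epsilon> - R)\<^sup>2)"
  proof -
    have a: "(\<epsilon> - R)\<^sup>2 \<le> \<epsilon>\<^sup>2" using R0 eps' by (intro power_mono) auto
    have b: "\<epsilon>\<^sup>2 \<le> real N * \<epsilon>\<^sup>2" using N by (simp add: mult_le_cancel_right1)
    have "(2 * real K / M\<^sup>2) * (\<epsilon> - R)\<^sup>2 \<le> (2 * real K / M\<^sup>2) * (real N * \<epsilon>\<^sup>2)"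
      using a b M_pos by (intro mult_left_mono) auto
    thus ?thesis by (simp add: field_simps)
  qed
  finally show ?thesis unfolding R_def .
qed

end
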